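(* Let $\Psi=(\psi_{ij})$ and $\Phi=(\phi_{ij})$ be orthogonal quantum Latin squares of order $6$, where $\Psi$ is classical: there are an orthonormal basis $e_1,\dots,e_6$ of $\mathbb C^6$ and a Latin square $L=(L_{ij})$ of order $6$ on $\{1,\dots,6\}$ with $\psi_{ij}\in\mathbb C e_{L_{ij}}$ for all $i,j$. Suppose $L$ has a subsquare of order three, i.e. there are $R,C\subseteq\{1,\dots,6\}$ with $|R|=|C|=3$ such that $\{L_{ij}: i\in R, j\in C\}$ has exactly $3$ elements. Then for each of the four blocks $A\times B$ with $A\in\{R,\{1,\dots,6\}\setminus R\}$ and $B\in\{C,\{1,\dots,6\}\setminus C\}$, the nine vectors $\phi_{ij}$, $(i,j)\in A\times B$, are pairwise distinct, in the sense that no two of them are scalar multiples of each other.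
   Context: A quantum Latin square (QLS) of order $n$ is an $n\times n$ matrix $\Psi=(\psi_{ij})_{1\le i,j\le n}$ whose entries are unit vectors in $\mathbb C^n$ such that the entries of each row and the entries of each column form an orthonormal basis of $\mathbb C^n$. Two QLS $\Psi=(\psi_{ij})$ and $\Phi=(\phi_{ij})$ of order $n$ are orthogonal if $\{\psi_{ij}\otimes\phi_{ij}: 1\le i,j\le n\}$ is an orthonormal basis of $\mathbb C^n\otimes\mathbb C^n$. *)

theory Defs
  imports "HOL-Analysis.Analysis"
begin

definition cinner :: "complex ^ 'n \<Rightarrow> complex ^ 'n \<Rightarrow> complex" where
  "cinner x y = (\<Sum>k\<in>UNIV. x $ k * cnj (y $ k))"

definition orthonormal_basis :: "'i set \<Rightarrow> ('i \<Rightarrow> complex ^ 'n) \<Rightarrow> bool" where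
  "orthonormal_basis I f \<longleftrightarrow>
     (\<forall>i\<in>I. \<forall>j\<in>I. cinner (f i) (f j) = (if i = j then 1 else 0)) \<and>
     (\<forall>v :: complex ^ 'n. \<exists>c :: 'i \<Rightarrow> complex. v = (\<Sum>i\<in>I. c i *s f i))"

definition qls :: "('n \<Rightarrow> 'n \<Rightarrow> complex ^ 'n) \<Rightarrow> bool" where
  "qls \<Psi> \<longleftrightarrow> (\<forall>i. orthonormal_basis UNIV (\<lambda>j. \<Psi> i j)) \<and>
               (\<forall>j. orthonormal_basis UNIV (\<lambda>i. \<Psi> i j))"

text \<open>Tensor product of vectors: C^n \<otimes> C^m identified with C^(n \<times> m).\<close>
definition tensor :: "complex ^ 'n \<Rightarrow> complex ^ 'm \<Rightarrow> complex ^ ('n \<times> 'm)" where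
  "tensor x y = (\<chi> p. x $ fst p * y $ snd p)"

definition orthogonal_qls :: "('n \<Rightarrow> 'n \<Rightarrow> complex ^ 'n) \<Rightarrow> ('n \<Rightarrow> 'n \<Rightarrow> complex ^ 'n) \<Rightarrow> bool" where
  "orthogonal_qls \<Psi> \<Phi> \<longleftrightarrow> qls \<Psi> \<and> qls \<Phi> \<and>
     orthonormal_basis (UNIV :: ('n \<times> 'n) set) (\<lambda>(i, j). tensor (\<Psi> i j) (\<Phi> i j))"

definition latin_square :: "('n \<Rightarrow> 'n \<Rightarrow> 'n) \<Rightarrow> bool" where
  "latin_square L \<longleftrightarrow> (\<forall>i. bij (L i)) \<and> (\<forall>j. bij (\<lambda>i. L i j))"

end

theory Submission
  imports Defs
begin


lemma cinner_cnj: "cnj (cinner x y) = cinner y x"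
  unfolding cinner_def by (simp add: mult.commute)

lemma cinner_sum_left:
  "cinner (\<Sum>i\<in>I. c i *s f i) w = (\<Sum>i\<in>I. c i * cinner (f i) w)"
  unfolding cinner_def
  by (simp add: sum_distrib_right sum_distrib_left mult.assoc sum.swap[of _ I])

lemma cinner_scale_right: "cinner x (c *s y) = cnj c * cinner x y"
  unfolding cinner_def by (simp add: sum_distrib_left algebra_simps)

lemma cinner_scale_left: "cinner (c *s x) y = c * cinner x y"
  unfolding cinner_def by (simp add: sum_distrib_left algebra_simps)

lemma parseval:
  assumes onb: "orthonormal_basis I f" and fin: "finite I"
  shows "(\<Sum>i\<in>I. complex_of_real ((cmod (cinner v (f i)))^2)) = cinner v v"
proof -
  from onb obtain c where v: "v = (\<Sum>i\<in>I. c i *s f i)"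
    unfolding orthonormal_basis_def by blast
  have on: "\<forall>i\<in>I. \<forall>j\<in>I. cinner (f i) (f j) = (if i = j then 1 else 0)"
    using onb unfolding orthonormal_basis_def by blast
  have cj: "cinner v (f j) = c j" if "j \<in> I" for j
  proof -
    have "cinner v (f j) = (\<Sum>i\<in>I. c i * cinner (f i) (f j))"
      by (subst v, rule cinner_sum_left)
    also have "\<dots> = (\<Sum>i\<in>I. if i = j then c i else 0)"
      using on that by (intro sum.cong) auto
    also have "\<dots> = c j" using fin that by simp
    finally show ?thesis .
  qed
  have "cinner v v = (\<Sum>i\<in>I. c i * cinner (f i) v)"
    by (subst (1) v, rule cinner_sum_left)
  also have "\<dots> = (\<Sum>i\<in>I. c i * cnj (c i))"
    by (intro sum.cong refl) (metis cj cinner_cnj)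
  also have "\<dots> = (\<Sum>i\<in>I. complex_of_real ((cmod (cinner v (f i)))^2))"
    by (intro sum.cong refl) (metis cj complex_norm_square)
  finally show ?thesis by simp
qed

lemma cinner_tensor: "cinner (tensor a b) (tensor c d) = cinner a c * cinner b d"
proof -
  have "cinner (tensor a b) (tensor c d) = (\<Sum>p\<in>UNIV \<times> UNIV. a $ fst p * b $ snd p * cnj (c $ fst p * d $ snd p))"
    unfolding cinner_def tensor_def by simp
  also have "\<dots> = (\<Sum>x\<in>UNIV. \<Sum>y\<in>UNIV. (a $ x * cnj (c $ x)) * (b $ y * cnj (d $ y)))"
    by (subst sum.cartesian_product) (simp add: case_prod_beta algebra_simps)
  also have "\<dots> = cinner a c * cinner b d"
    unfolding cinner_def by (simp add: sum_product)
  finally show ?thesis .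
qed


lemma comb:
  fixes G :: "6 \<Rightarrow> 6 \<Rightarrow> real" and L :: "6 \<Rightarrow> 6 \<Rightarrow> 6" and R C :: "6 set"
  assumes rows: "\<And>i. (\<Sum>j\<in>UNIV. G i j) = 1"
    and cols: "\<And>j. (\<Sum>i\<in>UNIV. G i j) = 1"
    and syms: "\<And>s. (\<Sum>(i,j)\<in>{(i,j). L i j = s}. G i j) = 1"
    and L_latin: "latin_square L"
    and R_card: "card R = 3" and C_card: "card C = 3"
    and subsq: "card {L i j | i j. i \<in> R \<and> j \<in> C} = 3"
  shows "(\<Sum>(i,j)\<in>R \<times> C. G i j) = 3/2 \<and> (\<Sum>(i,j)\<in>R \<times> (UNIV - C). G i j) = 3/2 \<and>
         (\<Sum>(i,j)\<in>(UNIV - R) \<times> C. G i j) = 3/2 \<and> (\<Sum>(i,j)\<in>(UNIV - R) \<times> (UNIV - C). G i j) = 3/2"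
proof -
  define S where "S = {L i j | i j. i \<in> R \<and> j \<in> C}"
  have injr: "inj (L i)" for i using L_latin unfolding latin_square_def bij_def by blast
  have injc: "inj (\<lambda>i. L i j)" for j using L_latin unfolding latin_square_def bij_def by blast
  have cS: "card S = 3" using subsq S_def by simp
  have cU: "card (UNIV :: 6 set) = 6" by simp
  have cS': "card (UNIV - S) = 3" using cS by (simp add: card_Diff_subset)
  have k1: "L i j \<in> S" if "i \<in> R" "j \<in> C" for i j using that S_def by blast
  have k2: "L i j \<notin> S" if "i \<in> R" "j \<notin> C" for i j
  proof
    assume a: "L i j \<in> S"
    have sub: "L i ` C \<subseteq> S" using k1 that by blast
    have "card (L i ` C) = 3" using card_image[of "L i" C] injr[of i] C_card
      by (simp add: inj_on_subset)
    hence "L i ` C = S" using sub cS by (simp add: card_subset_eq)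
    with a obtain j' where "j' \<in> C" "L i j = L i j'" by blast
    with injr[of i] that show False by (metis injD)
  qed
  have k3: "L i j \<notin> S" if "i \<notin> R" "j \<in> C" for i j
  proof
    assume a: "L i j \<in> S"
    have sub: "(\<lambda>i. L i j) ` R \<subseteq> S" using k1 that by blast
    have "card ((\<lambda>i. L i j) ` R) = 3" using card_image[of "\<lambda>i. L i j" R] injc[of j] R_card
      by (simp add: inj_on_subset)
    hence "(\<lambda>i. L i j) ` R = S" using sub cS by (simp add: card_subset_eq)
    with a obtain i' where "i' \<in> R" "L i j = L i' j" by blast
    with injc[of j] that show False by (metis injD)
  qed
  have k4: "L i j \<in> S" if "i \<notin> R" "j \<notin> C" for i j
  proof (rule ccontr)
    assume a: "L i j \<notin> S"
    have sub: "(\<lambda>i. L i j) ` R \<subseteq> UNIV - S" using k2 that by blast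
    have "card ((\<lambda>i. L i j) ` R) = 3" using card_image[of "\<lambda>i. L i j" R] injc[of j] R_card
      by (simp add: inj_on_subset)
    hence "(\<lambda>i. L i j) ` R = UNIV - S" using sub cS' by (simp add: card_subset_eq)
    with a obtain i' where "i' \<in> R" "L i j = L i' j" by blast
    with injc[of j] that show False by (metis injD)
  qed
  define f where "f = (\<lambda>(i,j). G i j)"
  define X where "X = sum f (R \<times> C)"
  define Y where "Y = sum f (R \<times> (UNIV - C))"
  define Z where "Z = sum f ((UNIV - R) \<times> C)"
  define W where "W = sum f ((UNIV - R) \<times> (UNIV - C))"
  have "sum f (R \<times> UNIV) = (\<Sum>i\<in>R. \<Sum>j\<in>UNIV. G i j)"
    unfolding f_def by (simp add: sum.cartesian_product)
  also have "\<dots> = 3" using rows R_card by simp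
  finally have e1: "sum f (R \<times> UNIV) = 3" .
  have "R \<times> UNIV = R \<times> C \<union> R \<times> (UNIV - C)" by blast
  hence "sum f (R \<times> UNIV) = X + Y" unfolding X_def Y_def
    by (simp add: sum.union_disjoint[symmetric] Times_Int_Times)
  hence XY: "X + Y = 3" using e1 by simp
  have "sum f (UNIV \<times> C) = (\<Sum>i\<in>UNIV. \<Sum>j\<in>C. G i j)"
    unfolding f_def by (simp add: sum.cartesian_product)
  also have "\<dots> = (\<Sum>j\<in>C. \<Sum>i\<in>UNIV. G i j)" by (rule sum.swap)
  also have "\<dots> = 3" using cols C_card by simp
  finally have e2: "sum f (UNIV \<times> C) = 3" .
  have "UNIV \<times> C = R \<times> C \<union> (UNIV - R) \<times> C" by blast
  hence "sum f (UNIV \<times> C) = X + Z" unfolding X_def Z_def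
    by (simp add: sum.union_disjoint[symmetric] Times_Int_Times)
  hence XZ: "X + Z = 3" using e2 by simp
  have "sum f (UNIV \<times> UNIV) = (\<Sum>i\<in>UNIV. \<Sum>j\<in>UNIV. G i j)"
    unfolding f_def by (simp add: sum.cartesian_product)
  also have "\<dots> = 6" using rows by simp
  finally have e3: "sum f (UNIV \<times> UNIV) = 6" .
  have "UNIV \<times> UNIV = (R \<times> UNIV) \<union> ((UNIV - R) \<times> C \<union> (UNIV - R) \<times> (UNIV - C))" by blast
  hence "sum f (UNIV \<times> UNIV) = sum f (R \<times> UNIV) + (Z + W)" unfolding Z_def W_def
    by (simp add: sum.union_disjoint[symmetric] Times_Int_Times Int_Un_distrib Int_Un_distrib2)
  hence T: "3 + Z + W = 6" using e3 e1 by simp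
  define P where "P = {p :: 6 \<times> 6. L (fst p) (snd p) \<in> S}"
  have "sum f P = (\<Sum>s\<in>S. sum f {p \<in> P. L (fst p) (snd p) = s})"
    by (rule sum.group[symmetric]) (auto simp: P_def)
  also have "\<dots> = (\<Sum>s\<in>S. 1)"
  proof (rule sum.cong[OF refl])
    fix s assume "s \<in> S"
    hence "{p \<in> P. L (fst p) (snd p) = s} = {(i,j). L i j = s}" by (auto simp: P_def)
    thus "sum f {p \<in> P. L (fst p) (snd p) = s} = 1" using syms[of s] unfolding f_def by simp
  qed
  also have "\<dots> = 3" using cS by simp
  finally have e4: "sum f P = 3" .
  have "P = R \<times> C \<union> (UNIV - R) \<times> (UNIV - C)"
    unfolding P_def using k1 k2 k3 k4 by (auto; blast)
  hence "sum f P = X + W" unfolding X_def W_def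
    by (simp add: sum.union_disjoint[symmetric] Times_Int_Times)
  hence XW: "X + W = 3" using e4 by simp
  have "X = 3/2" "Y = 3/2" "Z = 3/2" "W = 3/2" using XY XZ XW T by linarith+
  thus ?thesis unfolding X_def Y_def Z_def W_def f_def by simp
qed


lemma unit_scale:
  assumes "cinner (c *s x) (c *s x) = 1" "cinner x x = 1"
  shows "(cmod c)^2 = 1"
proof -
  have "c * cnj c = 1" using assms by (simp add: cinner_scale_left cinner_scale_right mult.assoc mult.commute)
  hence "complex_of_real ((cmod c)^2) = 1" by (metis complex_norm_square)
  thus ?thesis by (metis of_real_eq_1_iff)
qed

lemma parseval_real:
  assumes "orthonormal_basis I f" "finite I" "cinner v v = 1"
  shows "(\<Sum>i\<in>I. (cmod (cinner v (f i)))^2) = 1"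
proof -
  have "complex_of_real (\<Sum>i\<in>I. (cmod (cinner v (f i)))^2) = 1"
    using parseval[OF assms(1,2), of v] assms(3) by (simp only: of_real_sum)
  thus ?thesis by (metis of_real_eq_1_iff)
qed

theorem mainTheorem12:
  fixes \<Psi> \<Phi> :: "6 \<Rightarrow> 6 \<Rightarrow> complex ^ 6"
    and e :: "6 \<Rightarrow> complex ^ 6"
    and L :: "6 \<Rightarrow> 6 \<Rightarrow> 6"
    and R C :: "6 set"
  assumes orth: "orthogonal_qls \<Psi> \<Phi>"
    and e_onb: "orthonormal_basis UNIV e"
    and L_latin: "latin_square L"
    and classical: "\<forall>i j. \<exists>c :: complex. \<Psi> i j = c *s e (L i j)"
    and R_card: "card R = 3" and C_card: "card C = 3"
    and subsq: "card {L i j | i j. i \<in> R \<and> j \<in> C} = 3"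
  shows "\<forall>A \<in> {R, UNIV - R}. \<forall>B \<in> {C, UNIV - C}.
           \<forall>i\<in>A. \<forall>j\<in>B. \<forall>k\<in>A. \<forall>l\<in>B. (i, j) \<noteq> (k, l) \<longrightarrow>
             \<not> (\<exists>c :: complex. \<Phi> i j = c *s \<Phi> k l)"
proof (intro ballI impI notI)
  fix A B i j k l
  assume AB: "A \<in> {R, UNIV - R}" "B \<in> {C, UNIV - C}"
    and ij: "i \<in> A" "j \<in> B" and kl: "k \<in> A" "l \<in> B" and ne: "(i, j) \<noteq> (k, l)"
  assume "\<exists>c :: complex. \<Phi> i j = c *s \<Phi> k l"
  then obtain c where c: "\<Phi> i j = c *s \<Phi> k l" by blast
  have qP: "qls \<Psi>" and qF: "qls \<Phi>"
    and big: "orthonormal_basis (UNIV :: (6 \<times> 6) set) (\<lambda>(i, j). tensor (\<Psi> i j) (\<Phi> i j))"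
    using orth unfolding orthogonal_qls_def by blast+
  have rowF: "orthonormal_basis UNIV (\<lambda>j. \<Phi> i j)" for i using qF unfolding qls_def by blast
  have colF: "orthonormal_basis UNIV (\<lambda>i. \<Phi> i j)" for j using qF unfolding qls_def by blast
  have rowP: "orthonormal_basis UNIV (\<lambda>j. \<Psi> i j)" for i using qP unfolding qls_def by blast
  have unitF: "cinner (\<Phi> i j) (\<Phi> i j) = 1" for i j
    using rowF[of i] unfolding orthonormal_basis_def by simp
  have unitP: "cinner (\<Psi> i j) (\<Psi> i j) = 1" for i j
    using rowP[of i] unfolding orthonormal_basis_def by simp
  have eon: "cinner (e s) (e t) = (if s = t then 1 else 0)" for s t
    using e_onb unfolding orthonormal_basis_def by simp
  define v where "v = \<Phi> k l"
  have vv: "cinner v v = 1" using unitF v_def by simp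
  define G where "G = (\<lambda>i j. (cmod (cinner v (\<Phi> i j)))^2)"
  have rows: "(\<Sum>j\<in>UNIV. G i j) = 1" for i
    unfolding G_def by (rule parseval_real[OF rowF _ vv]) simp
  have cols: "(\<Sum>i\<in>UNIV. G i j) = 1" for j
    unfolding G_def by (rule parseval_real[OF colF _ vv]) simp
  have syms: "(\<Sum>(i,j)\<in>{(i,j). L i j = s}. G i j) = 1" for s
  proof -
    define w where "w = tensor (e s) v"
    have ww: "cinner w w = 1" unfolding w_def by (simp add: cinner_tensor eon vv)
    have tm: "(cmod (cinner w ((\<lambda>(i, j). tensor (\<Psi> i j) (\<Phi> i j)) p)))^2
        = (if L (fst p) (snd p) = s then G (fst p) (snd p) else 0)" for p
    proof (cases p)
      case (Pair a b)
      obtain d where d: "\<Psi> a b = d *s e (L a b)" using classical by blast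
      have "(cmod d)^2 = 1" using unit_scale[of d "e (L a b)"] unitP[of a b] d eon by simp
      hence "cmod d = 1" by (metis norm_ge_zero power2_eq_1_iff abs_of_nonneg abs_neg_one abs_of_nonneg zero_le_one)
      thus ?thesis using Pair d unfolding w_def G_def
        by (simp add: cinner_tensor cinner_scale_right eon norm_mult)
    qed
    have "1 = (\<Sum>p\<in>UNIV. (cmod (cinner w ((\<lambda>(i, j). tensor (\<Psi> i j) (\<Phi> i j)) p)))^2)"
      using parseval_real[OF big _ ww] by simp
    also have "\<dots> = (\<Sum>p\<in>UNIV. if L (fst p) (snd p) = s then G (fst p) (snd p) else 0)"
      by (simp only: tm)
    also have "\<dots> = (\<Sum>p\<in>{p\<in>UNIV. L (fst p) (snd p) = s}. G (fst p) (snd p))"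
      by (rule sum.inter_filter[symmetric]) simp
    also have "{p\<in>UNIV. L (fst p) (snd p) = s} = {(i,j). L i j = s}" by auto
    finally show ?thesis by (simp add: case_prod_beta)
  qed
  have blocks: "(\<Sum>(i,j)\<in>A \<times> B. G i j) = 3/2"
    using comb[of G L R C, OF rows cols syms L_latin R_card C_card subsq] AB by auto
  have Gkl: "G k l = 1" unfolding G_def v_def using unitF by simp
  have "(cmod c)^2 = 1" using unit_scale[of c "\<Phi> k l"] unitF c by metis
  hence Gij: "G i j = 1" unfolding G_def v_def using c unitF
    by (simp add: cinner_scale_right norm_mult)
  have "(\<Sum>(i,j)\<in>{(i,j),(k,l)}. G i j) \<le> (\<Sum>(i,j)\<in>A \<times> B. G i j)"
    by (rule sum_mono2) (use ij kl G_def in auto)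
  moreover have "(\<Sum>(i,j)\<in>{(i,j),(k,l)}. G i j) = 2" using ne Gij Gkl by simp
  ultimately show False using blocks by simp
qed

end
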